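(* Let $\hat A_n(t)=\sum_{\pi\in\mathfrak S_n}t^{\mathrm{altdes}(\pi)+1}$ for $n\ge1$. Then \[ 1+\sum_{n\ge1}\hat A_n(t)\frac{x^n}{n!}=\frac{1-t}{1-t\bigl(\sec((1-t)x)+\tan((1-t)x)\bigr)}. \]
   Context: For $\pi\in\mathfrak S_n$, $i\in[n-1]$ is an alternating descent if $i$ odd and $\pi_i>\pi_{i+1}$, or $i$ even and $\pi_i<\pi_{i+1}$; $\mathrm{altdes}(\pi)$ is the number of alternating descents. *)

theory Defs
  imports "HOL-Combinatorics.Permutations" "HOL-Computational_Algebra.Formal_Power_Series"
begin

definition altdes :: "nat \<Rightarrow> (nat \<Rightarrow> nat) \<Rightarrow> nat" where
  "altdes n \<pi> = card {i \<in> {1..n-1}.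
      (odd i \<and> \<pi> i > \<pi> (Suc i)) \<or> (even i \<and> \<pi> i < \<pi> (Suc i))}"

definition altEulerian :: "nat \<Rightarrow> 'a::comm_ring_1 \<Rightarrow> 'a" where
  "altEulerian n t = (\<Sum>\<pi> \<in> {\<pi>. \<pi> permutes {1..n}}. t ^ (altdes n \<pi> + 1))"

end

theory Submission
  imports Defs
begin

unbundle fps_syntax


fun ad :: "bool \<Rightarrow> int list \<Rightarrow> nat" where
  "ad p (x # y # zs) = (if (p \<and> x > y) \<or> (\<not>p \<and> x < y) then 1 else 0) + ad (\<not>p) (y # zs)"
| "ad p _ = 0"

lemma ad_neg: "ad (\<not>p) xs = ad p (map uminus xs)"
  by (induction p xs rule: ad.induct) auto

lemma ad_append:
  assumes "ys \<noteq> []"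
  shows "ad p (ys @ z # zs) = ad p ys +
     (let q = (if even (length ys - 1) then p else \<not>p) in
       (if (q \<and> last ys > z) \<or> (\<not>q \<and> last ys < z) then 1 else 0) + ad (\<not>q) (z # zs))"
  using assms
proof (induction ys arbitrary: p)
  case Nil then show ?case by simp
next
  case (Cons y ys)
  show ?case
  proof (cases ys)
    case Nil then show ?thesis by (simp add: Let_def)
  next
    case (Cons y' ys')
    have "ad p ((y # ys) @ z # zs) = (if (p \<and> y > y') \<or> (\<not>p \<and> y < y') then 1 else 0)
          + ad (\<not>p) (ys @ z # zs)" using Cons by simp
    also have "ad (\<not>p) (ys @ z # zs) = ad (\<not>p) ys +
     (let q = (if even (length ys - 1) then \<not>p else \<not>\<not>p) in
       (if (q \<and> last ys > z) \<or> (\<not>q \<and> last ys < z) then 1 else 0) + ad (\<not>q) (z # zs))"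
      using Cons.IH Cons by simp
    finally show ?thesis using Cons by (auto simp: Let_def)
  qed
qed

definition P :: "int set \<Rightarrow> int list set" where
  "P A = {xs. distinct xs \<and> set xs = A}"

lemma finite_P: "finite A \<Longrightarrow> finite (P A)"
proof -
  assume "finite A"
  have "P A \<subseteq> {xs. set xs \<subseteq> A \<and> length xs \<le> card A}"
    unfolding P_def using distinct_card by fastforce
  moreover have "finite {xs. set xs \<subseteq> A \<and> length xs \<le> card A}"
    using finite_lists_length_le[OF \<open>finite A\<close>] by simp
  ultimately show ?thesis by (rule finite_subset)
qed

lemma sum_P_neg: "(\<Sum>xs\<in>P A. f (map uminus xs)) = (\<Sum>xs\<in>P (uminus ` A). f xs)"
proof -
  have inj: "inj_on (map uminus) (P A)" by (auto simp: inj_on_def)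
  have img: "map uminus ` P A = P (uminus ` A)"
  proof
    show "map uminus ` P A \<subseteq> P (uminus ` A)"
      by (auto simp: P_def distinct_map inj_on_def)
    show "P (uminus ` A) \<subseteq> map uminus ` P A"
    proof
      fix xs assume "xs \<in> P (uminus ` A)"
      then have "map uminus xs \<in> P A" "xs = map uminus (map uminus xs)"
        by (auto simp: P_def distinct_map inj_on_def image_iff)
      then show "xs \<in> map uminus ` P A" by blast
    qed
  qed
  show ?thesis using sum.reindex[OF inj, of f] img by simp
qed

lemma sum_pow_card:
  assumes "finite B"
  shows "(\<Sum>Y\<in>Pow B. g (card Y)) = (\<Sum>k\<le>card B. of_nat (card B choose k) * g k)"
proof -
  have "(\<Sum>Y\<in>Pow B. g (card Y)) = (\<Sum>k\<le>card B. \<Sum>Y\<in>{Y. Y \<in> Pow B \<and> card Y = k}. g (card Y))"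
    by (rule sum.group[symmetric]) (use assms card_mono in auto)
  also have "\<dots> = (\<Sum>k\<le>card B. \<Sum>Y\<in>{Y. Y \<subseteq> B \<and> card Y = k}. g k)"
    by (intro sum.cong) auto
  also have "\<dots> = (\<Sum>k\<le>card B. of_nat (card B choose k) * g k)"
    using n_subsets[OF assms] by simp
  finally show ?thesis .
qed




definition w :: "real \<Rightarrow> nat \<Rightarrow> nat \<Rightarrow> real" where
  "w t k r = (if even k then t ^ ((if k = 0 then 0 else 1) + (if r = 0 then 0 else 1)) else 1)"

fun alpha :: "real \<Rightarrow> nat \<Rightarrow> real" where
  "alpha t 0 = 1"
| "alpha t (Suc n) = (\<Sum>k\<le>n. of_nat (n choose k) * w t k (n-k) * alpha t k * alpha t (n-k))"

lemma ad_split: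
  assumes "\<forall>y\<in>set ys. y < m" "\<forall>z\<in>set zs. z < m"
  shows "ad True (ys @ m # zs) = (if even (length ys) then ad True ys + (if ys = [] then 0 else 1)
      + (if zs = [] then 0 else 1) + ad False zs else ad True ys + ad True zs)"
proof (cases "ys = []")
  case True
  then show ?thesis using assms by (cases zs) auto
next
  case False
  have l: "last ys < m" using assms(1) False by simp
  have "even (length ys - 1) \<longleftrightarrow> odd (length ys)" using False by (cases ys) auto
  then show ?thesis using ad_append[OF False, of True m zs] l assms(2) False
    by (cases zs) (auto simp: Let_def)
qed




definition Sa :: "real \<Rightarrow> int set \<Rightarrow> real" where
  "Sa t A = (\<Sum>xs\<in>P A. t ^ ad True xs)"

lemma P_split:
  assumes "finite A" "m \<in> A"
  shows "(\<Sum>xs\<in>P A. f xs) = (\<Sum>Y\<in>Pow (A - {m}). \<Sum>ys\<in>P Y. \<Sum>zs\<in>P (A - {m} - Y). f (ys @ m # zs))"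
proof -
  let ?B = "A - {m}"
  let ?Q = "\<Union>Y\<in>Pow ?B. P Y \<times> P (?B - Y)"
  have inj: "inj_on (\<lambda>(ys,zs). ys @ m # zs) ?Q"
  proof (rule inj_onI)
    fix p q assume a: "p \<in> ?Q" "q \<in> ?Q" "(\<lambda>(ys,zs). ys @ m # zs) p = (\<lambda>(ys,zs). ys @ m # zs) q"
    obtain ys zs where p: "p = (ys,zs)" by (cases p)
    obtain ys' zs' where q: "q = (ys',zs')" by (cases q)
    have "m \<notin> set ys" "m \<notin> set zs" using a(1) p by (auto simp: P_def)
    from append_Cons_eq_iff[OF this, of ys' zs'] a(3) p q show "p = q" by simp
  qed
  have img: "(\<lambda>(ys,zs). ys @ m # zs) ` ?Q = P A"
  proof
    show "(\<lambda>(ys,zs). ys @ m # zs) ` ?Q \<subseteq> P A"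
      using assms by (auto simp: P_def)
    show "P A \<subseteq> (\<lambda>(ys,zs). ys @ m # zs) ` ?Q"
    proof
      fix xs assume xs: "xs \<in> P A"
      then have "m \<in> set xs" using assms by (auto simp: P_def)
      then obtain ys zs where e: "xs = ys @ m # zs" using split_list by metis
      have "(ys, zs) \<in> P (set ys) \<times> P (?B - set ys)" "set ys \<in> Pow ?B"
        using xs e by (auto simp: P_def)
      then show "xs \<in> (\<lambda>(ys,zs). ys @ m # zs) ` ?Q" using e by force
    qed
  qed
  have fin: "finite ?B" using assms by simp
  have "(\<Sum>xs\<in>P A. f xs) = (\<Sum>p\<in>?Q. f (case p of (ys,zs) \<Rightarrow> ys @ m # zs))"
    using sum.reindex[OF inj, of f] img by (simp add: case_prod_unfold)
  also have "\<dots> = (\<Sum>Y\<in>Pow ?B. \<Sum>p\<in>P Y \<times> P (?B - Y). f (case p of (ys,zs) \<Rightarrow> ys @ m # zs))"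
  proof (rule sum.UNION_disjoint)
    show "finite (Pow ?B)" using fin by simp
    show "\<forall>Y\<in>Pow ?B. finite (P Y \<times> P (?B - Y))"
      using fin by (auto intro!: finite_P finite_subset[OF _ fin])
    show "\<forall>Y\<in>Pow ?B. \<forall>Z\<in>Pow ?B. Y \<noteq> Z \<longrightarrow> P Y \<times> P (?B - Y) \<inter> P Z \<times> P (?B - Z) = {}"
      by (auto simp: P_def)
  qed
  also have "\<dots> = (\<Sum>Y\<in>Pow ?B. \<Sum>ys\<in>P Y. \<Sum>zs\<in>P (?B - Y). f (ys @ m # zs))"
    by (subst sum.cartesian_product) (simp add: case_prod_unfold)
  finally show ?thesis .
qed

lemma Sa_main: "finite A \<Longrightarrow> Sa t A = alpha t (card A)"
proof (induction "card A" arbitrary: A rule: less_induct)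
  case less
  show ?case
  proof (cases "A = {}")
    case True
    have "P A = {[]}" using True by (auto simp: P_def)
    then show ?thesis using True by (simp add: Sa_def)
  next
    case False
    define m where "m = Max A"
    define B where "B = A - {m}"
    define n where "n = card B"
    have mA: "m \<in> A" using False less.prems m_def by simp
    have fB: "finite B" using less.prems B_def by simp
    have cA: "card A = Suc n" using card_Suc_Diff1[OF less.prems mA] by (simp add: n_def B_def)
    have Bm: "\<forall>x\<in>B. x < m"
    proof
      fix x assume "x \<in> B"
      then have "x \<in> A" "x \<noteq> m" by (auto simp: B_def)
      then show "x < m" using Max_ge[OF less.prems, of x] m_def by simp
    qed
    have Sb: "(\<Sum>zs\<in>P Z. t ^ ad False zs) = alpha t (card Z)" if "Z \<subseteq> B" for Z
    proof -
      have "(\<Sum>zs\<in>P Z. t ^ ad False zs) = (\<Sum>zs\<in>P Z. t ^ ad True (map uminus zs))"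
        using ad_neg[of True] by simp
      also have "\<dots> = Sa t (uminus ` Z)" unfolding Sa_def by (rule sum_P_neg)
      also have "\<dots> = alpha t (card (uminus ` Z))"
      proof -
        have "card Z \<le> n" using card_mono[OF fB that] n_def by simp
        moreover have "finite Z" using finite_subset[OF that fB] .
        ultimately show ?thesis using less.hyps[of "uminus ` Z"] cA by (simp add: card_image)
      qed
      also have "card (uminus ` Z) = card Z" by (simp add: card_image)
      finally show ?thesis .
    qed
    have inner: "(\<Sum>ys\<in>P Y. \<Sum>zs\<in>P (B - Y). t ^ ad True (ys @ m # zs))
        = w t (card Y) (n - card Y) * alpha t (card Y) * alpha t (n - card Y)" if Y: "Y \<subseteq> B" for Y
    proof -
      have fY: "finite Y" using Y fB finite_subset by blast
      have SY: "Sa t Y = alpha t (card Y)"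
      proof -
        have "card Y \<le> n" using card_mono[OF fB Y] n_def by simp
        then show ?thesis using less.hyps[of Y] cA fY by simp
      qed
      have SZ: "Sa t (B - Y) = alpha t (card (B - Y))"
      proof -
        have "card (B - Y) \<le> n" using card_mono[of B "B - Y"] fB n_def by auto
        then show ?thesis using less.hyps[of "B - Y"] cA fB by simp
      qed
      have SZ': "(\<Sum>zs\<in>P (B - Y). t ^ ad False zs) = alpha t (card (B - Y))"
        using Sb[of "B - Y"] by auto
      have cBY: "card (B - Y) = n - card Y" using Y fB by (simp add: n_def card_Diff_subset fY)
      have lenY: "length ys = card Y" if "ys \<in> P Y" for ys
        using that by (auto simp: P_def distinct_card)
      have nzY: "ys = [] \<longleftrightarrow> card Y = 0" if "ys \<in> P Y" for ys
        using that fY by (auto simp: P_def)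
      have e0: "B - Y = {} \<longleftrightarrow> n - card Y = 0" using cBY fB by (metis card_0_eq finite_Diff)
      have nzZ: "zs = [] \<longleftrightarrow> n - card Y = 0" if "zs \<in> P (B - Y)" for zs
      proof -
        from that have "set zs = B - Y" by (simp add: P_def)
        then show ?thesis using e0 by (metis set_empty)
      qed
      have pt: "t ^ ad True (ys @ m # zs) = (if even (card Y) then
            w t (card Y) (n - card Y) * t ^ ad True ys * t ^ ad False zs
            else t ^ ad True ys * t ^ ad True zs)"
        if ys: "ys \<in> P Y" and zs: "zs \<in> P (B - Y)" for ys zs
      proof -
        have "\<forall>y\<in>set ys. y < m" "\<forall>z\<in>set zs. z < m" using ys zs Y Bm by (auto simp: P_def)
        note e = ad_split[OF this]
        show ?thesis
        proof (cases "even (card Y)")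
          case True
          have "ad True (ys @ m # zs) = ((if card Y = 0 then 0 else 1) + (if n - card Y = 0 then 0 else 1))
              + ad True ys + ad False zs"
            using e True lenY[OF ys] nzY[OF ys] nzZ[OF zs] by simp
          then show ?thesis using True by (simp only: w_def power_add if_True)
        next
          case False
          have "ad True (ys @ m # zs) = ad True ys + ad True zs"
            using e False lenY[OF ys] by simp
          then show ?thesis using False by (simp add: power_add)
        qed
      qed
      show ?thesis
      proof (cases "even (card Y)")
        case True
        have "(\<Sum>ys\<in>P Y. \<Sum>zs\<in>P (B - Y). t ^ ad True (ys @ m # zs))
           = (\<Sum>ys\<in>P Y. \<Sum>zs\<in>P (B - Y). w t (card Y) (n - card Y) * t ^ ad True ys * t ^ ad False zs)"
          using pt True by (intro sum.cong) auto
        also have "\<dots> = w t (card Y) (n - card Y) * (\<Sum>ys\<in>P Y. \<Sum>zs\<in>P (B - Y). t ^ ad True ys * t ^ ad False zs)"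
          by (simp add: sum_distrib_left mult.assoc)
        also have "\<dots> = w t (card Y) (n - card Y) * (Sa t Y * (\<Sum>zs\<in>P (B - Y). t ^ ad False zs))"
          by (simp only: Sa_def sum_product)
        finally show ?thesis using SY SZ' cBY by simp
      next
        case False
        have "(\<Sum>ys\<in>P Y. \<Sum>zs\<in>P (B - Y). t ^ ad True (ys @ m # zs))
           = (\<Sum>ys\<in>P Y. \<Sum>zs\<in>P (B - Y). t ^ ad True ys * t ^ ad True zs)"
          using pt False by (intro sum.cong) auto
        also have "\<dots> = Sa t Y * Sa t (B - Y)"
          by (simp only: Sa_def sum_product)
        finally show ?thesis using SY SZ cBY False by (simp add: w_def)
      qed
    qed
    have "Sa t A = (\<Sum>Y\<in>Pow B. \<Sum>ys\<in>P Y. \<Sum>zs\<in>P (B - Y). t ^ ad True (ys @ m # zs))"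
      unfolding Sa_def B_def by (rule P_split[OF less.prems mA])
    also have "\<dots> = (\<Sum>Y\<in>Pow B. w t (card Y) (n - card Y) * alpha t (card Y) * alpha t (n - card Y))"
      using inner by (intro sum.cong) auto
    also have "\<dots> = (\<Sum>k\<le>n. of_nat (n choose k) * (w t k (n - k) * alpha t k * alpha t (n - k)))"
      unfolding n_def by (rule sum_pow_card[OF fB])
    also have "\<dots> = alpha t (card A)" using cA by (simp add: mult.assoc)
    finally show ?thesis .
  qed
qed




lemma ad_sum: "ad p xs = (\<Sum>i<length xs - 1. if (even i = p \<and> xs!i > xs!Suc i) \<or> (even i \<noteq> p \<and> xs!i < xs!Suc i) then 1 else 0)"
proof (induction p xs rule: ad.induct)
  case (1 p x y zs)
  have "length (x # y # zs) - 1 = Suc (length (y # zs) - 1)" by simp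
  then show ?case using 1 by (simp only: sum.lessThan_Suc_shift) (simp, intro sum.cong, auto)
qed auto

definition L :: "nat \<Rightarrow> (nat \<Rightarrow> nat) \<Rightarrow> int list" where
  "L n \<pi> = map (\<lambda>i. int (\<pi> i)) [1..<n+1]"

lemma L_nth: "j < n \<Longrightarrow> L n \<pi> ! j = int (\<pi> (Suc j))"
  by (simp add: L_def del: upt_Suc)

lemma L_len: "length (L n \<pi>) = n"
  by (simp add: L_def del: upt_Suc)

lemma altdes_L:
  assumes "\<pi> permutes {1..n}"
  shows "altdes n \<pi> = ad True (L n \<pi>)"
proof -
  have "altdes n \<pi> = (\<Sum>i\<in>{1..n-1}. if (odd i \<and> \<pi> i > \<pi> (Suc i)) \<or> (even i \<and> \<pi> i < \<pi> (Suc i)) then 1 else 0)"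
    unfolding altdes_def by (subst sum.inter_filter[symmetric]) auto
  also have "{1..n-1} = Suc ` {..<n-1}" 
  proof (rule set_eqI)
    fix x show "x \<in> {1..n-1} \<longleftrightarrow> x \<in> Suc ` {..<n-1}" by (cases x) auto
  qed
  also have "(\<Sum>i\<in>Suc ` {..<n-1}. if (odd i \<and> \<pi> i > \<pi> (Suc i)) \<or> (even i \<and> \<pi> i < \<pi> (Suc i)) then 1 else 0)
     = (\<Sum>j<n-1. if (odd (Suc j) \<and> \<pi> (Suc j) > \<pi> (Suc (Suc j))) \<or> (even (Suc j) \<and> \<pi> (Suc j) < \<pi> (Suc (Suc j))) then 1 else 0)"
    by (simp add: sum.reindex)
  also have "\<dots> = ad True (L n \<pi>)"
    unfolding ad_sum L_len by (intro sum.cong) (auto simp: L_nth)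
  finally show ?thesis .
qed

lemma L_bij: "bij_betw (L n) {\<pi>. \<pi> permutes {1..n}} (P (int ` {1..n}))"
proof (rule bij_betw_imageI)
  show "inj_on (L n) {\<pi>. \<pi> permutes {1..n}}"
  proof (rule inj_onI)
    fix p q assume p: "p \<in> {\<pi>. \<pi> permutes {1..n}}" and q: "q \<in> {\<pi>. \<pi> permutes {1..n}}"
      and e: "L n p = L n q"
    show "p = q"
    proof
      fix i show "p i = q i"
      proof (cases "i \<in> {1..n}")
        case True
        then have "L n p ! (i - 1) = int (p i)" "L n q ! (i - 1) = int (q i)"
          using L_nth[of "i - 1" n] by auto
        then show ?thesis using e by simp
      next
        case False
        then show ?thesis using p q permutes_not_in[of p "{1..n}" i] permutes_not_in[of q "{1..n}" i] by simp
      qed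
    qed
  qed
  show "L n ` {\<pi>. \<pi> permutes {1..n}} = P (int ` {1..n})"
  proof
    show "L n ` {\<pi>. \<pi> permutes {1..n}} \<subseteq> P (int ` {1..n})"
    proof clarify
      fix p assume p: "p permutes {1..n}"
      have ip: "inj_on p {1..n}" using permutes_inj[OF p] by (rule inj_on_subset) simp
      have "inj_on (\<lambda>i. int (p i)) {1..<n+1}"
      proof (rule inj_onI)
        fix x y assume "x \<in> {1..<n+1}" "y \<in> {1..<n+1}" "int (p x) = int (p y)"
        then show "x = y" using inj_onD[OF ip, of x y] by simp
      qed
      then have "distinct (L n p)" by (simp add: L_def distinct_map del: upt_Suc)
      moreover have "set (L n p) = int ` p ` {1..n}" by (auto simp: L_def simp del: upt_Suc)
      ultimately show "L n p \<in> P (int ` {1..n})"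
        using permutes_image[OF p] by (simp add: P_def)
    qed
    show "P (int ` {1..n}) \<subseteq> L n ` {\<pi>. \<pi> permutes {1..n}}"
    proof
      fix xs assume xs: "xs \<in> P (int ` {1..n})"
      then have d: "distinct xs" and s: "set xs = int ` {1..n}" by (auto simp: P_def)
      have len: "length xs = n" using distinct_card[OF d] s by (simp add: card_image)
      define p where "p i = (if i \<in> {1..n} then nat (xs ! (i - 1)) else i)" for i
      have pin: "p i \<in> {1..n}" if "i \<in> {1..n}" for i
      proof -
        have "xs ! (i - 1) \<in> set xs" using that len by auto
        then show ?thesis using s that by (auto simp: p_def)
      qed
      have inj: "inj_on p {1..n}"
      proof (rule inj_onI)
        fix i j assume i: "i \<in> {1..n}" and j: "j \<in> {1..n}" and e: "p i = p j"
        have "xs ! (i - 1) \<in> set xs" "xs ! (j - 1) \<in> set xs" using i j len by auto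
        then have "xs ! (i - 1) \<ge> 1" "xs ! (j - 1) \<ge> 1" using s by auto
        then have "xs ! (i - 1) = xs ! (j - 1)" using e i j by (simp add: p_def)
        then have "i - 1 = j - 1" using nth_eq_iff_index_eq[OF d] i j len by auto
        then show "i = j" using i j by auto
      qed
      have "p ` {1..n} = {1..n}"
        using inj pin by (intro card_subset_eq) (auto simp: card_image)
      then have "bij_betw p {1..n} {1..n}" using inj by (simp add: bij_betw_def)
      then have pp: "p permutes {1..n}" by (rule bij_imp_permutes) (auto simp: p_def)
      have "L n p = xs"
      proof (rule nth_equalityI)
        show "length (L n p) = length xs" using len by (simp add: L_len)
        fix i assume "i < length (L n p)"
        then have i: "i < n" by (simp add: L_len)
        have "xs ! i \<in> set xs" using i len by auto
        then have "xs ! i \<ge> 1" using s by auto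
        then show "L n p ! i = xs ! i" using i by (simp add: L_nth p_def)
      qed
      then show "xs \<in> L n ` {\<pi>. \<pi> permutes {1..n}}" using pp by blast
    qed
  qed
qed

lemma altEulerian_alpha: "altEulerian n t = t * alpha t n"
proof -
  have "altEulerian n t = (\<Sum>\<pi> \<in> {\<pi>. \<pi> permutes {1..n}}. t * t ^ ad True (L n \<pi>))"
    unfolding altEulerian_def by (intro sum.cong) (auto simp: altdes_L)
  also have "\<dots> = (\<Sum>xs\<in>P (int ` {1..n}). t * t ^ ad True xs)"
    using sum.reindex_bij_betw[OF L_bij, of "\<lambda>xs. t * t ^ ad True xs"] by simp
  also have "\<dots> = t * Sa t (int ` {1..n})" by (simp add: Sa_def sum_distrib_left)
  also have "\<dots> = t * alpha t n" using Sa_main[of "int ` {1..n}" t] by (simp add: card_image)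
  finally show ?thesis .
qed





definition N :: "real fps \<Rightarrow> real fps" where
  "N a = Abs_fps (\<lambda>n. (-1)^n * a $ n)"

lemma N_nth [simp]: "N a $ n = (-1)^n * a $ n"
  by (simp add: N_def)

lemma N_mult: "N (a * b) = N a * N b"
proof (rule fps_ext)
  fix n
  have "N (a * b) $ n = (\<Sum>i=0..n. (-1)^n * (a $ i * b $ (n-i)))"
    by (simp add: fps_mult_nth sum_distrib_left)
  also have "\<dots> = (\<Sum>i=0..n. ((-1)^i * a $ i) * ((-1)^(n-i) * b $ (n-i)))"
  proof (intro sum.cong refl)
    fix i assume "i \<in> {0..n}"
    then have "(-1::real)^n = (-1)^i * (-1)^(n-i)" by (simp flip: power_add)
    then show "(-1)^n * (a $ i * b $ (n-i)) = ((-1)^i * a $ i) * ((-1)^(n-i) * b $ (n-i))" by simp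
  qed
  also have "\<dots> = (N a * N b) $ n" by (simp add: fps_mult_nth)
  finally show "N (a * b) $ n = (N a * N b) $ n" .
qed

lemma N_add: "N (a + b) = N a + N b" by (rule fps_ext) (simp add: algebra_simps)
lemma N_diff: "N (a - b) = N a - N b" by (rule fps_ext) (simp add: algebra_simps)
lemma N_const: "N (fps_const c) = fps_const c" by (rule fps_ext) simp
lemma N_one: "N 1 = 1" by (rule fps_ext) simp

lemma N_inverse: assumes "a $ 0 \<noteq> 0" shows "N (inverse a) = inverse (N a)"
proof -
  have "N a * N (inverse a) = 1" using N_mult[of a "inverse a"] inverse_mult_eq_1'[OF assms] N_one by simp
  then show ?thesis by (simp add: fps_inverse_unique)
qed

lemma N_cos: "N (fps_cos c) = fps_cos c"
  by (rule fps_ext) (auto simp: fps_cos_def)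

lemma N_sin: "N (fps_sin c) = - fps_sin c"
  by (rule fps_ext) (auto simp: fps_sin_def)

definition Phi :: "real \<Rightarrow> real fps \<Rightarrow> bool" where
  "Phi t G \<longleftrightarrow> 2 * fps_const t * fps_deriv G =
     (G - N G) * (G - (1 - fps_const t)) + fps_const t ^ 2 * (G + N G) * G"

lemma Phi_G2:
  fixes t :: real assumes t1: "t \<noteq> 1"
  defines "G \<equiv> fps_const (1 - t) / (1 - fps_const t * (inverse (fps_cos (1 - t)) + fps_tan (1 - t)))"
  shows "Phi t G \<and> G $ 0 = 1"
proof -
  define C where "C = fps_cos (1 - t)"
  define S where "S = fps_sin (1 - t)"
  define T where "T = fps_const t"
  define K where "K = C - T * (1 + S)"
  define Kh where "Kh = C - T * (1 - S)"
  define D where "D = 1 - T * (inverse C + fps_tan (1 - t))"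
  have C0: "C $ 0 = 1" by (simp add: C_def)
  have invC: "inverse C * C = 1" using inverse_mult_eq_1[of C] C0 by simp
  have tan: "fps_tan (1 - t) = S * inverse C"
    by (simp add: fps_tan_def fps_divide_unit S_def C_def)
  have DC: "D * C = K" unfolding D_def tan K_def using invC by algebra
  have D0: "D $ 0 = 1 - t"
    using C0 by (simp add: D_def tan T_def fps_mult_nth S_def)
  have cT: "fps_const (1 - t) = 1 - T" unfolding T_def by (simp only: fps_const_sub[symmetric] fps_const_1_eq_1[symmetric])
  have G: "G = (1 - T) * inverse D"
  proof -
    have "G = fps_const (1 - t) / D" unfolding G_def D_def T_def C_def ..
    then show ?thesis using D0 t1 by (simp add: fps_divide_unit cT)
  qed
  have A: "G * K = (1 - T) * C"
  proof -
    have "G * K = (1 - T) * (inverse D * D) * C" by (simp add: G DC[symmetric] mult.assoc)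
    then show ?thesis using inverse_mult_eq_1[of D] D0 t1 by simp
  qed
  have dC: "fps_deriv C = - (1 - T) * S"
  proof -
    have "fps_deriv C = fps_const (-(1-t)) * S" by (simp add: C_def S_def fps_cos_deriv)
    also have "fps_const (-(1-t)) = - fps_const (1-t)" by simp
    finally show ?thesis unfolding cT by simp
  qed
  have dS: "fps_deriv S = (1 - T) * C"
    unfolding cT[symmetric] by (simp add: C_def S_def fps_sin_deriv)
  have dT: "fps_deriv T = 0" by (simp add: T_def)
  have dK: "fps_deriv K = - (1 - T) * S - T * ((1 - T) * C)"
    by (simp add: K_def dC dS dT algebra_simps)
  have dA: "fps_deriv G * K + G * fps_deriv K = (1 - T) * fps_deriv C"
    using arg_cong[OF A, of fps_deriv] by (simp add: dT add.commute)
  have pyth: "C^2 + S^2 = 1" unfolding C_def S_def by (rule fps_sin_cos_sum_of_squares)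
  have B: "fps_deriv G * K^2 = (1 - T)^2 * T * (1 + S)"
    using dA A dK dC pyth unfolding K_def by algebra
  have NK: "N K = Kh"
    by (simp add: K_def Kh_def N_diff N_mult N_add N_one T_def N_const C_def S_def N_cos N_sin)
  have NA: "N G * Kh = (1 - T) * C"
  proof -
    have "N (G * K) = N ((1 - T) * C)" using A by simp
    then show ?thesis by (simp add: N_mult NK N_diff N_one T_def N_const C_def N_cos)
  qed
  have K0: "K \<noteq> 0"
  proof
    assume "K = 0" then have "K $ 0 = 0" by simp
    then show False using t1 by (simp add: K_def C_def S_def T_def)
  qed
  have Kh0: "Kh \<noteq> 0"
  proof
    assume "Kh = 0" then have "Kh $ 0 = 0" by simp
    then show False using t1 by (simp add: Kh_def C_def S_def T_def)
  qed
  have Z: "K^2 * Kh * (2 * T * fps_deriv G - ((G - N G) * (G - (1 - T)) + T ^ 2 * (G + N G) * G)) = 0"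
    using A NA B pyth unfolding K_def Kh_def by algebra
  have "2 * T * fps_deriv G = (G - N G) * (G - (1 - T)) + T ^ 2 * (G + N G) * G"
    using Z K0 Kh0 by simp
  then have "Phi t G" by (simp add: Phi_def T_def)
  moreover have "G $ 0 = 1"
  proof -
    have "(G * K) $ 0 = ((1 - T) * C) $ 0" using A by simp
    then show ?thesis using t1 C0 by (simp add: K_def T_def S_def)
  qed
  ultimately show ?thesis by simp
qed





lemma Phi_coeff: "Phi t G \<longleftrightarrow> (\<forall>n. 2 * t * (of_nat (n+1) * G $ (n+1)) =
    (\<Sum>i=0..n. (G $ i - (-1)^i * G $ i) * (G $ (n-i) - (if n - i = 0 then 1 - t else 0)))
    + t^2 * (\<Sum>i=0..n. (G $ i + (-1)^i * G $ i) * G $ (n-i)))"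
proof -
  have e1: "(2 * fps_const t * F) $ n = 2 * t * F $ n" for F :: "real fps" and n
  proof -
    have "2 * fps_const t = fps_const (2 * t)" by (simp add: numeral_fps_const)
    then show ?thesis by simp
  qed
  have e2: "(fps_const t ^ 2 * F * H) $ n = t^2 * (F * H) $ n" for F H :: "real fps" and n
    by (simp add: mult.assoc)
  have e3: "(1::real fps) $ j - fps_const t $ j = (if j = 0 then 1 - t else 0)" for j
    by simp
  show ?thesis unfolding Phi_def fps_eq_iff fps_add_nth e1 e2 fps_deriv_nth
    by (simp only: fps_mult_nth e3 N_nth fps_add_nth fps_sub_nth)
qed

lemma Phi_unique:
  assumes t: "t \<noteq> 0" and G: "Phi t G" and H: "Phi t H" and z: "G $ 0 = H $ 0"
  shows "G = H"
proof -
  have "\<forall>m\<le>n. G $ m = H $ m" for n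
  proof (induction n)
    case 0 then show ?case using z by simp
  next
    case (Suc n)
    have IH: "G $ m = H $ m" if "m \<le> n" for m using Suc that by simp
    have "2 * t * (of_nat (n+1) * G $ (n+1)) = 2 * t * (of_nat (n+1) * H $ (n+1))"
    proof -
      have "2 * t * (of_nat (n+1) * G $ (n+1)) =
        (\<Sum>i=0..n. (G $ i - (-1)^i * G $ i) * (G $ (n-i) - (if n - i = 0 then 1 - t else 0)))
        + t^2 * (\<Sum>i=0..n. (G $ i + (-1)^i * G $ i) * G $ (n-i))"
        using G unfolding Phi_coeff by blast
      also have "\<dots> = (\<Sum>i=0..n. (H $ i - (-1)^i * H $ i) * (H $ (n-i) - (if n - i = 0 then 1 - t else 0)))
        + t^2 * (\<Sum>i=0..n. (H $ i + (-1)^i * H $ i) * H $ (n-i))"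
        using IH by (intro arg_cong2[where f = "(+)"] arg_cong2[where f = "(*)"] refl sum.cong) auto
      also have "\<dots> = 2 * t * (of_nat (n+1) * H $ (n+1))"
        using H unfolding Phi_coeff by metis
      finally show ?thesis .
    qed
    then have "G $ (n+1) = H $ (n+1)" using t by simp
    then show ?case using IH le_Suc_eq by auto
  qed
  then show ?thesis by (auto simp: fps_eq_iff)
qed

definition g :: "real \<Rightarrow> nat \<Rightarrow> real" where
  "g t n = (if n = 0 then 1 else t * alpha t n / fact n)"

lemma summand:
  assumes "i \<le> n"
  shows "(g t i - (-1)^i * g t i) * (g t (n-i) - (if n - i = 0 then 1 - t else 0))
         + t^2 * ((g t i + (-1)^i * g t i) * g t (n-i))
       = 2 * t^2 * (of_nat (n choose i) * w t i (n-i) * alpha t i * alpha t (n-i)) / fact n"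
proof -
  have b: "of_nat (n choose i) / fact n = 1 / (fact i * fact (n - i) :: real)"
    using binomial_fact[OF assms, where 'a=real] by (simp add: field_simps)
  have r: "g t (n-i) - (if n - i = 0 then 1 - t else 0) = t * alpha t (n-i) / fact (n-i)"
    by (simp add: g_def)
  have eqR: "2 * t^2 * (of_nat (n choose i) * w t i (n-i) * alpha t i * alpha t (n-i)) / fact n
      = 2 * t^2 * (w t i (n-i) * alpha t i * alpha t (n-i)) * (of_nat (n choose i) / fact n)"
    by (simp add: field_simps)
  also have "\<dots> = 2 * t^2 * (w t i (n-i) * alpha t i * alpha t (n-i)) / (fact i * fact (n - i))"
    unfolding b by simp
  finally have eqR: "2 * t^2 * (of_nat (n choose i) * w t i (n-i) * alpha t i * alpha t (n-i)) / fact n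
      = 2 * t^2 * (w t i (n-i) * alpha t i * alpha t (n-i)) / (fact i * fact (n - i))" .
  moreover have "(g t i - (-1)^i * g t i) * (g t (n-i) - (if n - i = 0 then 1 - t else 0))
         + t^2 * ((g t i + (-1)^i * g t i) * g t (n-i))
      = 2 * t^2 * (w t i (n-i) * alpha t i * alpha t (n-i)) / (fact i * fact (n - i))"
  proof (cases "even i")
    case True
    then show ?thesis unfolding r by (auto simp: g_def w_def field_simps power2_eq_square)
  next
    case False
    then have "i \<noteq> 0" "0 < i" by (auto intro: Nat.gr0I)
    then show ?thesis unfolding r using False by (simp add: g_def w_def field_simps power2_eq_square)
  qed
  ultimately show ?thesis by (simp only:)
qed

lemma Phi_G1: "Phi t (Abs_fps (g t))"
  unfolding Phi_coeff fps_nth_Abs_fps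
proof
  fix n
  have "(\<Sum>i=0..n. (g t i - (-1)^i * g t i) * (g t (n-i) - (if n - i = 0 then 1 - t else 0)))
        + t^2 * (\<Sum>i=0..n. (g t i + (-1)^i * g t i) * g t (n-i))
      = (\<Sum>i=0..n. (g t i - (-1)^i * g t i) * (g t (n-i) - (if n - i = 0 then 1 - t else 0))
        + t^2 * ((g t i + (-1)^i * g t i) * g t (n-i)))"
    by (simp add: sum.distrib sum_distrib_left)
  also have "\<dots> = (\<Sum>i\<le>n. 2 * t^2 * (of_nat (n choose i) * w t i (n-i) * alpha t i * alpha t (n-i)) / fact n)"
    by (simp only: atLeast0AtMost) (intro sum.cong refl summand, simp)
  also have "\<dots> = 2 * t^2 * alpha t (Suc n) / fact n"
    by (simp add: sum_divide_distrib[symmetric] sum_distrib_left[symmetric])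
  also have "\<dots> = 2 * t * (of_nat (n+1) * g t (n+1))"
  proof -
    have "g t (n+1) = t * alpha t (Suc n) / (of_nat (Suc n) * fact n)"
      unfolding g_def using fact_Suc[of n, where 'a=real] by (simp del: alpha.simps fact_Suc)
    then have "of_nat (n+1) * g t (n+1) = t * alpha t (Suc n) / fact n"
      by (simp del: alpha.simps fact_Suc)
    then show ?thesis by (simp add: power2_eq_square del: alpha.simps)
  qed
  finally show "2 * t * (of_nat (n+1) * g t (n+1)) =
     (\<Sum>i=0..n. (g t i - (-1)^i * g t i) * (g t (n-i) - (if n - i = 0 then 1 - t else 0)))
        + t^2 * (\<Sum>i=0..n. (g t i + (-1)^i * g t i) * g t (n-i))" by simp
qed

theorem mainTheorem14:
  fixes t :: real
  assumes "t \<noteq> 1"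
  shows "Abs_fps (\<lambda>n. if n = 0 then 1 else altEulerian n t / fact n)
       = fps_const (1 - t) /
         (1 - fps_const t * (inverse (fps_cos (1 - t)) + fps_tan (1 - t)))"
proof (cases "t = 0")
  case True
  have "Abs_fps (\<lambda>n. if n = 0 then 1 else altEulerian n t / fact n) = 1"
    by (rule fps_ext) (simp add: altEulerian_alpha True)
  then show ?thesis using True by simp
next
  case False
  have L: "Abs_fps (\<lambda>n. if n = 0 then 1 else altEulerian n t / fact n) = Abs_fps (g t)"
    by (rule fps_ext) (simp add: altEulerian_alpha g_def)
  show ?thesis unfolding L
    using Phi_unique[OF False Phi_G1] Phi_G2[OF assms] by (simp add: g_def)
qed



end
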